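(* For $d\ge1$, let $A(d)$ be the sequence of the numbers $A(d,i,j)$, $0\le i\le d-1$, $1\le j\le d$, listed in increasing order of the pairs $(i,j)$ with respect to the total order $(i,j)<(i',j')$ iff $i<i'$, or $i=i'$ and $j>j'$. Then $A(d)$ is symmetric and unimodal; in particular its peak lies in the middle.
   Context: $S_d$ is the symmetric group on $[d]=\{1,\dots,d\}$. For $\sigma\in S_d$, $\mathrm{des}(\sigma)=\#\{i\in[d-1]:\sigma(i)>\sigma(i+1)\}$. For $0\le i\le d-1$ and $1\le j\le d$, $A(d,i,j)=\#\{\sigma\in S_d:\mathrm{des}(\sigma)=i,\ \sigma(1)=j\}$. A sequence $(s_0,\dots,s_N)$ is unimodal if $s_0\le\dots\le s_p\ge\dots\ge s_N$ for some $p$, and symmetric if $s_t=s_{N-t}$ for all $t$. *)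

theory Defs
  imports "HOL-Combinatorics.Permutations"
begin

definition des :: "nat \<Rightarrow> (nat \<Rightarrow> nat) \<Rightarrow> nat" where
  "des d \<sigma> = card {i \<in> {1..d-1}. \<sigma> i > \<sigma> (Suc i)}"

definition A :: "nat \<Rightarrow> nat \<Rightarrow> nat \<Rightarrow> nat" where
  "A d i j = card {\<sigma>. \<sigma> permutes {1..d} \<and> des d \<sigma> = i \<and> \<sigma> 1 = j}"

text \<open>The sequence A(d), indexed t = 0 .. d^2 - 1: the pairs (i,j) ordered by
  (i,j) < (i',j') iff i < i', or i = i' and j > j'. Position t corresponds to
  i = t div d and j = d - t mod d.\<close>
definition Aseq :: "nat \<Rightarrow> nat \<Rightarrow> nat" where
  "Aseq d t = A d (t div d) (d - t mod d)"

definition symmetric_seq :: "(nat \<Rightarrow> nat) \<Rightarrow> nat \<Rightarrow> bool" where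
  "symmetric_seq s N \<longleftrightarrow> (\<forall>t\<le>N. s t = s (N - t))"

definition unimodal_at :: "(nat \<Rightarrow> nat) \<Rightarrow> nat \<Rightarrow> nat \<Rightarrow> bool" where
  "unimodal_at s N p \<longleftrightarrow> p \<le> N \<and> (\<forall>t<p. s t \<le> s (Suc t)) \<and> (\<forall>t. p \<le> t \<and> t < N \<longrightarrow> s (Suc t) \<le> s t)"

definition unimodal_seq :: "(nat \<Rightarrow> nat) \<Rightarrow> nat \<Rightarrow> bool" where
  "unimodal_seq s N \<longleftrightarrow> (\<exists>p. unimodal_at s N p)"

end

theory Submission
  imports Defs "HOL-Combinatorics.Multiset_Permutations"
begin


fun F :: "nat \<Rightarrow> nat \<Rightarrow> nat \<Rightarrow> nat" where
  "F 0 i r = 0"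
| "F (Suc 0) i r = (if i = 0 then 1 else 0)"
| "F (Suc (Suc n)) i r = (\<Sum>k<Suc n. if k < r then (case i of 0 \<Rightarrow> 0 | Suc i' \<Rightarrow> F (Suc n) i' k) else F (Suc n) i k)"

fun ldes :: "nat list \<Rightarrow> nat" where
  "ldes (x # y # ys) = (if y < x then 1 else 0) + ldes (y # ys)"
| "ldes _ = 0"

definition rank :: "nat set \<Rightarrow> nat \<Rightarrow> nat" where
  "rank S x = card {y\<in>S. y < x}"

definition B :: "nat set \<Rightarrow> nat \<Rightarrow> nat \<Rightarrow> nat" where
  "B S i x = card {xs \<in> permutations_of_set S. ldes xs = i \<and> hd xs = x}"

lemma rank_mono:
  assumes "finite S" "y \<in> S" "y < z"
  shows "rank S y < rank S z"
  unfolding rank_def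
proof (rule psubset_card_mono)
  show "finite {w \<in> S. w < z}" using assms by simp
  show "{w \<in> S. w < y} \<subset> {w \<in> S. w < z}" using assms by auto
qed

lemma rank_lt:
  assumes "finite S" "x \<in> S"
  shows "rank S x < card S"
  unfolding rank_def
  by (rule psubset_card_mono) (use assms in auto)

lemma rank_bij:
  assumes "finite S"
  shows "bij_betw (rank S) S {..<card S}"
proof -
  have inj: "inj_on (rank S) S"
  proof (rule inj_onI)
    fix x y assume "x \<in> S" "y \<in> S" "rank S x = rank S y"
    then show "x = y" using rank_mono[OF assms, of x y] rank_mono[OF assms, of y x]
      by (metis less_irrefl linorder_neqE_nat)
  qed
  have sub: "rank S ` S \<subseteq> {..<card S}" using rank_lt[OF assms] by auto
  have "card (rank S ` S) = card {..<card S}" using card_image[OF inj] by simp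
  then have "rank S ` S = {..<card S}" using sub by (simp add: card_subset_eq)
  with inj show ?thesis by (simp add: bij_betw_def)
qed

lemma rank_Diff:
  assumes "finite S" "x \<in> S" "y \<in> S" "y \<noteq> x"
  shows "rank (S - {x}) y = (if y < x then rank S y else rank S y - 1)"
proof (cases "y < x")
  case True
  then have "{w \<in> S - {x}. w < y} = {w \<in> S. w < y}" by auto
  then show ?thesis using True by (simp add: rank_def)
next
  case False
  then have "{w \<in> S - {x}. w < y} = {w \<in> S. w < y} - {x}" by auto
  moreover have "x \<in> {w \<in> S. w < y}" using False assms by auto
  ultimately show ?thesis using False assms(1) by (simp add: rank_def)
qed

lemma ldes_cons: "ys \<noteq> [] \<Longrightarrow> ldes (x # ys) = (if hd ys < x then 1 else 0) + ldes ys"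
  by (cases ys) auto

lemma B_rec:
  assumes fin: "finite S" and xS: "x \<in> S" and c: "card S \<ge> 2"
  shows "B S i x = (\<Sum>y\<in>S-{x}. if y < x then (case i of 0 \<Rightarrow> 0 | Suc i' \<Rightarrow> B (S-{x}) i' y) else B (S-{x}) i y)"
proof -
  let ?S' = "S - {x}"
  let ?T = "\<lambda>y. {ys \<in> permutations_of_set ?S'. hd ys = y \<and> ldes (x#ys) = i}"
  have c1: "card ?S' \<ge> 1" using c fin xS by simp
  have ne: "\<And>ys. ys \<in> permutations_of_set ?S' \<Longrightarrow> ys \<noteq> []"
  proof
    fix ys assume "ys \<in> permutations_of_set ?S'" "ys = []"
    then have "?S' = {}" by (metis permutations_of_setD(1) empty_set)
    then have "card ?S' = 0" by (simp only: card.empty)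
    then show False using c1 by simp
  qed
  have eq: "{xs \<in> permutations_of_set S. ldes xs = i \<and> hd xs = x} = (\<Union>y\<in>?S'. (#) x ` ?T y)"
  proof (rule set_eqI, rule iffI)
    fix xs assume xs: "xs \<in> {xs \<in> permutations_of_set S. ldes xs = i \<and> hd xs = x}"
    then have sx: "set xs = S" "distinct xs" "ldes xs = i" "hd xs = x" by (auto dest: permutations_of_setD)
    then have "xs \<noteq> []" using xS by auto
    then obtain ys where ys: "xs = x # ys" using sx(4) by (cases xs) auto
    then have sy: "set ys = ?S'" "distinct ys" using sx by auto
    then have ysP: "ys \<in> permutations_of_set ?S'" by (rule permutations_of_setI)
    then have "ys \<noteq> []" by (rule ne)
    then have "hd ys \<in> ?S'" using sy by (metis hd_in_set)
    moreover have "ys \<in> ?T (hd ys)" using ysP sx ys by simp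
    ultimately show "xs \<in> (\<Union>y\<in>?S'. (#) x ` ?T y)" using ys by blast
  next
    fix xs assume "xs \<in> (\<Union>y\<in>?S'. (#) x ` ?T y)"
    then obtain y ys where "y \<in> ?S'" "ys \<in> ?T y" "xs = x # ys" by auto
    then show "xs \<in> {xs \<in> permutations_of_set S. ldes xs = i \<and> hd xs = x}"
      using xS by (auto simp: permutations_of_set_def)
  qed
  have "B S i x = (\<Sum>y\<in>?S'. card ((#) x ` ?T y))"
    unfolding B_def eq
  proof (rule card_UN_disjoint)
    show "finite ?S'" using fin by simp
    show "\<forall>y\<in>?S'. finite ((#) x ` ?T y)" by simp
    show "\<forall>y\<in>?S'. \<forall>z\<in>?S'. y \<noteq> z \<longrightarrow> (#) x ` ?T y \<inter> (#) x ` ?T z = {}" by blast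
  qed
  also have "\<dots> = (\<Sum>y\<in>?S'. card (?T y))"
    by (rule sum.cong[OF refl], rule card_image) (simp add: inj_on_def)
  also have "\<dots> = (\<Sum>y\<in>?S'. if y < x then (case i of 0 \<Rightarrow> 0 | Suc i' \<Rightarrow> B ?S' i' y) else B ?S' i y)"
  proof (rule sum.cong[OF refl])
    fix y assume yS: "y \<in> ?S'"
    have T: "?T y = {ys \<in> permutations_of_set ?S'. hd ys = y \<and> (if y < x then 1 else 0) + ldes ys = i}"
    proof (rule Collect_cong)
      fix ys show "(ys \<in> permutations_of_set ?S' \<and> hd ys = y \<and> ldes (x#ys) = i) =
         (ys \<in> permutations_of_set ?S' \<and> hd ys = y \<and> (if y < x then 1 else 0) + ldes ys = i)"
        using ne[of ys] ldes_cons[of ys x] by metis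
    qed
    show "card (?T y) = (if y < x then (case i of 0 \<Rightarrow> 0 | Suc i' \<Rightarrow> B ?S' i' y) else B ?S' i y)"
    proof (cases "y < x")
      case True
      show ?thesis
      proof (cases i)
        case 0 then show ?thesis using True T by simp
      next
        case (Suc i')
        have "?T y = {xs \<in> permutations_of_set ?S'. ldes xs = i' \<and> hd xs = y}"
          unfolding T using True Suc by auto
        then show ?thesis using True Suc unfolding B_def by simp
      qed
    next
      case False
      have "?T y = {xs \<in> permutations_of_set ?S'. ldes xs = i \<and> hd xs = y}"
        unfolding T using False by auto
      then show ?thesis using False unfolding B_def by simp
    qed
  qed
  finally show ?thesis .
qed

lemma B_F:
  "\<forall>(S::nat set) x i. finite S \<longrightarrow> card S = n \<longrightarrow> x \<in> S \<longrightarrow> B S i x = F n i (rank S x)"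
proof (induction n)
  case 0 then show ?case by auto
next
  case (Suc n)
  show ?case
  proof (intro allI impI)
    fix S :: "nat set" and x i assume fin: "finite S" and cS: "card S = Suc n" and xS: "x \<in> S"
    show "B S i x = F (Suc n) i (rank S x)"
    proof (cases n)
      case 0
      from cS 0 have "card S = 1" by simp
      then obtain z where "S = {z}" by (rule card_1_singletonE)
      with xS have "S = {x}" by simp
      have "{xs \<in> permutations_of_set S. ldes xs = i \<and> hd xs = x} = (if i = 0 then {[x]} else {})"
        using \<open>S = {x}\<close> by auto
      then show ?thesis using 0 by (simp add: B_def)
    next
      case (Suc m)
      let ?S' = "S - {x}"
      have fin': "finite ?S'" and c': "card ?S' = n" using fin cS xS by auto
      have "B S i x = (\<Sum>y\<in>?S'. if y < x then (case i of 0 \<Rightarrow> 0 | Suc i' \<Rightarrow> B ?S' i' y) else B ?S' i y)"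
        using B_rec[OF fin xS] cS Suc by simp
      also have "\<dots> = (\<Sum>y\<in>?S'. (\<lambda>k. if k < rank S x then (case i of 0 \<Rightarrow> 0 | Suc i' \<Rightarrow> F n i' k) else F n i k) (rank ?S' y))"
      proof (rule sum.cong[OF refl])
        fix y assume yS: "y \<in> ?S'"
        have IH: "\<And>j. B ?S' j y = F n j (rank ?S' y)" using Suc.IH fin' c' yS by blast
        have "y < x \<longleftrightarrow> rank ?S' y < rank S x"
        proof (cases "y < x")
          case True then show ?thesis using rank_Diff[OF fin xS, of y] rank_mono[OF fin, of y x] yS by auto
        next
          case False
          then have "x < y" using yS by auto
          then have "rank S x < rank S y" using rank_mono[OF fin xS] by auto
          then show ?thesis using False rank_Diff[OF fin xS, of y] yS by auto
        qed
        then show "(if y < x then (case i of 0 \<Rightarrow> 0 | Suc i' \<Rightarrow> B ?S' i' y) else B ?S' i y) =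
           (\<lambda>k. if k < rank S x then (case i of 0 \<Rightarrow> 0 | Suc i' \<Rightarrow> F n i' k) else F n i k) (rank ?S' y)"
          using IH by (auto split: nat.split)
      qed
      also have "\<dots> = (\<Sum>k<n. if k < rank S x then (case i of 0 \<Rightarrow> 0 | Suc i' \<Rightarrow> F n i' k) else F n i k)"
        using sum.reindex_bij_betw[OF rank_bij[OF fin']] c' by simp
      also have "\<dots> = F (Suc n) i (rank S x)" unfolding Suc F.simps(3) by (rule refl)
      finally show ?thesis .
    qed
  qed
qed



lemma ldes_upt: "ldes (map f [a..<b]) = card {k. a \<le> k \<and> Suc k < b \<and> f (Suc k) < f k}"
proof (induction "b - a" arbitrary: a)
  case 0
  then have e: "{k. a \<le> k \<and> Suc k < b \<and> f (Suc k) < f k} = {}" by auto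
  have u: "[a..<b] = []" using 0 by simp
  show ?case unfolding e u by simp
next
  case (Suc m)
  show ?case
  proof (cases "Suc a < b")
    case False
    then have e: "{k. a \<le> k \<and> Suc k < b \<and> f (Suc k) < f k} = {}" by auto
    have u: "[a..<b] = [a]" using False Suc(2) by (simp add: upt_rec)
    show ?thesis unfolding e u by simp
  next
    case True
    have ua: "[a..<b] = a # [Suc a..<b]" using True by (simp add: upt_rec)
    have ne: "map f [Suc a..<b] \<noteq> []" using True by simp
    have hd: "hd (map f [Suc a..<b]) = f (Suc a)" using True by (simp add: upt_rec)
    have IH: "ldes (map f [Suc a..<b]) = card {k. Suc a \<le> k \<and> Suc k < b \<and> f (Suc k) < f k}"
      using Suc by simp
    have st: "{k. a \<le> k \<and> Suc k < b \<and> f (Suc k) < f k} =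
      (if f (Suc a) < f a then insert a else id) {k. Suc a \<le> k \<and> Suc k < b \<and> f (Suc k) < f k}"
      using True by (auto simp: le_eq_less_or_eq)
    have fin: "finite {k. Suc a \<le> k \<and> Suc k < b \<and> f (Suc k) < f k}" by (rule finite_subset[of _ "{..<b}"]) auto
    show ?thesis unfolding ua list.map(2) ldes_cons[OF ne] hd IH st
      using fin by simp
  qed
qed

lemma des_ldes: "des d \<sigma> = ldes (map \<sigma> [1..<Suc d])"
proof -
  have "{i \<in> {1..d-1}. \<sigma> i > \<sigma> (Suc i)} = {k. 1 \<le> k \<and> Suc k < Suc d \<and> \<sigma> (Suc k) < \<sigma> k}"
    by auto
  then show ?thesis unfolding des_def ldes_upt by simp
qed

lemma perm_bij: "bij_betw (\<lambda>\<sigma>. map \<sigma> [1..<Suc d]) {\<sigma>. \<sigma> permutes {1..d}} (permutations_of_set {1..d})"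
proof -
  let ?P = "{\<sigma>. \<sigma> permutes {1..d}}"
  let ?f = "\<lambda>\<sigma>. map \<sigma> [1..<Suc d]"
  have inj: "inj_on ?f ?P"
  proof (rule inj_onI)
    fix \<sigma> \<tau> assume s: "\<sigma> \<in> ?P" and t: "\<tau> \<in> ?P" and eq: "?f \<sigma> = ?f \<tau>"
    have "\<forall>k\<in>set [1..<Suc d]. \<sigma> k = \<tau> k" using eq by (simp only: map_eq_conv)
    then have a: "\<And>k. k \<in> {1..d} \<Longrightarrow> \<sigma> k = \<tau> k" by auto
    show "\<sigma> = \<tau>"
    proof
      fix k show "\<sigma> k = \<tau> k"
        using a[of k] permutes_not_in[of \<sigma> "{1..d}" k] permutes_not_in[of \<tau> "{1..d}" k] s t
        by (cases "k \<in> {1..d}") auto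
    qed
  qed
  have ups: "[1..<Suc d] \<in> permutations_of_set {1..d}"
    by (rule permutations_of_setI) auto
  have sub: "?f ` ?P \<subseteq> permutations_of_set {1..d}"
  proof
    fix xs assume "xs \<in> ?f ` ?P"
    then obtain \<sigma> where s: "\<sigma> permutes {1..d}" and xs: "xs = ?f \<sigma>" by auto
    have "xs \<in> map \<sigma> ` permutations_of_set {1..d}" using xs ups by auto
    then show "xs \<in> permutations_of_set {1..d}" using permutations_of_set_image_permutes[OF s] by simp
  qed
  have "card (?f ` ?P) = card ?P" using card_image[OF inj] .
  also have "\<dots> = fact d" using card_permutations[of "{1..d}" d] by simp
  also have "\<dots> = card (permutations_of_set {1..d})" by simp
  finally have "?f ` ?P = permutations_of_set {1..d}"
    using sub by (simp add: card_subset_eq)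
  then show ?thesis using inj by (simp add: bij_betw_def)
qed

lemma A_B:
  assumes "d \<ge> 1"
  shows "A d i j = B {1..d} i j"
proof -
  let ?P = "{\<sigma>. \<sigma> permutes {1..d}}"
  let ?f = "\<lambda>\<sigma>. map \<sigma> [1..<Suc d]"
  let ?Q = "\<lambda>xs. ldes xs = i \<and> hd xs = j"
  have hd: "\<And>\<sigma>. hd (?f \<sigma>) = \<sigma> 1" using assms by (simp add: upt_conv_Cons del: upt_Suc)
  have setA: "{\<sigma>. \<sigma> permutes {1..d} \<and> des d \<sigma> = i \<and> \<sigma> 1 = j} = {\<sigma>\<in>?P. ?Q (?f \<sigma>)}"
  proof (rule Collect_cong)
    fix \<sigma> show "(\<sigma> permutes {1..d} \<and> des d \<sigma> = i \<and> \<sigma> 1 = j) = (\<sigma> \<in> ?P \<and> ?Q (?f \<sigma>))"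
      unfolding hd des_ldes[of d \<sigma>] by simp
  qed
  have bij: "bij_betw ?f ?P (permutations_of_set {1..d})" by (rule perm_bij)
  have inj: "inj_on ?f {\<sigma>\<in>?P. ?Q (?f \<sigma>)}"
    using bij unfolding bij_betw_def by (rule inj_on_subset[OF conjunct1]) auto
  have im: "?f ` ?P = permutations_of_set {1..d}" using bij by (rule bij_betw_imp_surj_on)
  have img: "?f ` {\<sigma>\<in>?P. ?Q (?f \<sigma>)} = {xs \<in> permutations_of_set {1..d}. ?Q xs}"
    unfolding im[symmetric] by blast
  show ?thesis unfolding A_def B_def setA
    using card_image[OF inj] img by simp
qed

lemma A_F:
  assumes "1 \<le> j" "j \<le> d"
  shows "A d i j = F d i (j - 1)"
proof -
  have "{y \<in> {1..d}. y < j} = {1..<j}" using assms by auto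
  then have r: "rank {1..d} j = j - 1" unfolding rank_def by simp
  have "A d i j = B {1..d} i j" using A_B assms by simp
  also have "\<dots> = F d i (j - 1)" using B_F[of d] assms r by simp
  finally show ?thesis .
qed



lemma F_vanish: "n \<le> i \<Longrightarrow> F n i r = 0"
proof (induction n arbitrary: i r rule: less_induct)
  case (less n)
  show ?case
  proof (cases n)
    case 0 then show ?thesis by simp
  next
    case (Suc m)
    show ?thesis
    proof (cases m)
      case 0 then show ?thesis using Suc less.prems by simp
    next
      case (Suc m')
      have "\<And>k. (if k < r then (case i of 0 \<Rightarrow> 0 | Suc i' \<Rightarrow> F (Suc m') i' k) else F (Suc m') i k) = 0"
      proof -
        fix k
        have a: "F (Suc m') i k = 0" using less.IH[of "Suc m'" i k] less.prems \<open>n = Suc m\<close> Suc by simp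
        have b: "(case i of 0 \<Rightarrow> 0 | Suc i' \<Rightarrow> F (Suc m') i' k) = 0"
        proof (cases i)
          case 0 then show ?thesis by simp
        next
          case (Suc i') then show ?thesis using less.IH[of "Suc m'" i' k] less.prems \<open>n = Suc m\<close> \<open>m = Suc m'\<close> by simp
        qed
        show "?thesis k" using a b by simp
      qed
      then show ?thesis using \<open>n = Suc m\<close> Suc by simp
    qed
  qed
qed

lemma F_sym: "i < Suc n \<Longrightarrow> r < Suc n \<Longrightarrow> F (Suc n) i r = F (Suc n) (n - i) (n - r)"
proof (induction n arbitrary: i r)
  case 0 then show ?case by simp
next
  case (Suc n)
  let ?g = "\<lambda>k. if k < r then (case i of 0 \<Rightarrow> 0 | Suc i' \<Rightarrow> F (Suc n) i' k) else F (Suc n) i k"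
  let ?h = "\<lambda>k. if k < Suc n - r then (case Suc n - i of 0 \<Rightarrow> 0 | Suc i' \<Rightarrow> F (Suc n) i' k) else F (Suc n) (Suc n - i) k"
  have "F (Suc (Suc n)) (Suc n - i) (Suc n - r) = (\<Sum>k<Suc n. ?h k)" by (simp only: F.simps(3))
  also have "\<dots> = (\<Sum>k<Suc n. ?h (Suc n - Suc k))" by (rule sum.nat_diff_reindex[symmetric])
  also have "\<dots> = (\<Sum>k<Suc n. ?g k)"
  proof (rule sum.cong[OF refl])
    fix k assume k: "k \<in> {..<Suc n}"
    then have kn: "k \<le> n" by simp
    have c: "(n - k < Suc n - r) = (\<not> k < r)" using kn Suc.prems by auto
    have main: "?h (n - k) = ?g k"
    proof (cases "k < r")
      case True
      then have hk: "?h (n - k) = F (Suc n) (Suc n - i) (n - k)" using c by simp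
      show ?thesis
      proof (cases i)
        case 0
        then show ?thesis unfolding hk using c True F_vanish[of "Suc n" "Suc n" "n - k"] by simp
      next
        case (Suc i')
        then have "F (Suc n) i' k = F (Suc n) (n - i') (n - k)" using Suc.IH[of i' k] Suc.prems kn by simp
        then show ?thesis unfolding hk using c True Suc by simp
      qed
    next
      case False
      then have hk: "?h (n - k) = (case Suc n - i of 0 \<Rightarrow> 0 | Suc i' \<Rightarrow> F (Suc n) i' (n - k))"
        using c by simp
      show ?thesis
      proof (cases "i = Suc n")
        case True
        then show ?thesis unfolding hk using c False F_vanish[of "Suc n" i k] by simp
      next
        case ne: False
        then have "Suc n - i = Suc (n - i)" using Suc.prems by simp
        moreover have "F (Suc n) i k = F (Suc n) (n - i) (n - k)" using Suc.IH[of i k] Suc.prems kn ne by simp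
        ultimately show ?thesis unfolding hk using c False by simp
      qed
    qed
    then show "?h (Suc n - Suc k) = ?g k" by (simp only: diff_Suc_Suc)
  qed
  also have "\<dots> = F (Suc (Suc n)) i r" by (simp only: F.simps(3))
  finally show ?case ..
qed

definition Sq :: "nat \<Rightarrow> nat \<Rightarrow> nat" where
  "Sq n t = F n (t div n) (n - 1 - t mod n)"

lemma arith_lin:
  fixes P D d i q :: int
  assumes "1 \<le> i" "0 \<le> q" "q \<le> d - 2" "2 * P + 2 * q + 2 \<le> D"
    "d \<le> 2 * i + 1 \<or> 2 * P \<le> D - 3 * d + 2 + 2 * i"
  shows "2 * P - 2 * i - d + 1 + 2 * q \<le> D - 2 * d"
  using assms by linarith

lemma arith_int:
  fixes d i q :: int
  assumes "1 \<le> i" "0 \<le> q" "q \<le> d - 2" "2 * (i * d + q) + 1 \<le> d * d - 1"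
  shows "(i - 1) * (d - 1) + q + i * (d - 1) + q \<le> (d - 1) * (d - 1) - 1"
proof -
  have e1: "(i - 1) * (d - 1) + q + i * (d - 1) + q = 2 * (i * d) - 2 * i - d + 1 + 2 * q"
    by (simp add: algebra_simps)
  have e2: "(d - 1) * (d - 1) - 1 = d * d - 2 * d" by (simp add: algebra_simps)
  have h: "2 * (i * d) + 2 * q + 2 \<le> d * d" using assms(4) by (simp add: algebra_simps)
  have alt: "d \<le> 2 * i + 1 \<or> 2 * (i * d) \<le> d * d - 3 * d + 2 + 2 * i"
  proof (cases "d \<le> 2 * i + 1")
    case True then show ?thesis by simp
  next
    case False
    have "0 \<le> (d - 2 - 2 * i) * (d - 1)" using False assms(1) by (intro mult_nonneg_nonneg) auto
    also have "\<dots> = d * d - 3 * d + 2 - 2 * (i * d) + 2 * i" by (simp add: algebra_simps)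
    finally show ?thesis by simp
  qed
  show ?thesis unfolding e1 e2 by (rule arith_lin[OF assms(1-3) h alt])
qed

lemma arith_nat:
  fixes n i' q :: nat
  assumes "q \<le> n" "2 * (Suc i' * Suc (Suc n) + q) + 1 \<le> Suc (Suc n) * Suc (Suc n) - 1"
  shows "i' * Suc n + q + Suc i' * Suc n + q \<le> Suc n * Suc n - 1"
proof -
  have h0: "2 * (Suc i' * Suc (Suc n) + q) + 2 \<le> Suc (Suc n) * Suc (Suc n)" using assms(2) by simp
  have h: "2 * (int (Suc i') * int (Suc (Suc n)) + int q) + 1 \<le> int (Suc (Suc n)) * int (Suc (Suc n)) - 1"
  proof -
    have "int (2 * (Suc i' * Suc (Suc n) + q) + 2) \<le> int (Suc (Suc n) * Suc (Suc n))"
      using h0 by (simp only: of_nat_le_iff)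
    then show ?thesis by (simp add: algebra_simps)
  qed
  have "(int (Suc i') - 1) * (int (Suc (Suc n)) - 1) + int q + int (Suc i') * (int (Suc (Suc n)) - 1) + int q
        \<le> (int (Suc (Suc n)) - 1) * (int (Suc (Suc n)) - 1) - 1"
    by (rule arith_int) (use assms h in auto)
  then have "int (i' * Suc n + q + Suc i' * Suc n + q) + 1 \<le> int (Suc n * Suc n)"
    by (simp add: algebra_simps)
  then show ?thesis by linarith
qed

lemma divmod_eq: "(b::nat) < n \<Longrightarrow> (a * n + b) div n = a \<and> (a * n + b) mod n = b"
  by (simp add: add.commute[of "a * n" b])

lemma Sq_sym:
  assumes t: "t \<le> Suc m * Suc m - 1"
  shows "Sq (Suc m) t = Sq (Suc m) (Suc m * Suc m - 1 - t)"
proof -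
  let ?n = "Suc m"
  define i where "i = t div ?n"
  define q where "q = t mod ?n"
  have tq: "t = i * ?n + q" unfolding i_def q_def by (rule div_mult_mod_eq[symmetric])
  have q: "q \<le> m" unfolding q_def using mod_less_divisor[of ?n t] by linarith
  have "t < ?n * ?n" using t by simp
  then have "t div ?n < ?n" by (rule less_mult_imp_div_less)
  then have i: "i \<le> m" unfolding i_def by simp
  have e1: "(m - i) * ?n + i * ?n = m * ?n" using i by (metis add_mult_distrib le_add_diff_inverse2)
  have "(m - i) * ?n + (m - q) + t = ?n * ?n - 1" using e1 q tq by simp
  then have nt: "?n * ?n - 1 - t = (m - i) * ?n + (m - q)" by simp
  have d2: "(?n * ?n - 1 - t) div ?n = m - i" "(?n * ?n - 1 - t) mod ?n = m - q"
    unfolding nt using divmod_eq[of "m - q" ?n "m - i"] by auto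
  have "Sq ?n t = F ?n i (m - q)" unfolding Sq_def i_def q_def by simp
  also have "\<dots> = F ?n (m - i) (m - (m - q))" using F_sym[of i m "m - q"] i q by simp
  also have "\<dots> = Sq ?n (?n * ?n - 1 - t)" unfolding Sq_def d2 by simp
  finally show ?thesis .
qed



lemma step:
  assumes Q: "\<forall>u v. u \<le> v \<longrightarrow> u + v \<le> Suc n * Suc n - 1 \<longrightarrow> Sq (Suc n) u \<le> Sq (Suc n) v"
    and t: "2 * t + 1 \<le> Suc (Suc n) * Suc (Suc n) - 1"
  shows "Sq (Suc (Suc n)) t \<le> Sq (Suc (Suc n)) (Suc t)"
proof -
  let ?d = "Suc (Suc n)"
  let ?m = "Suc n"
  define i where "i = t div ?d"
  define q where "q = t mod ?d"
  have tq: "t = i * ?d + q" unfolding i_def q_def by (rule div_mult_mod_eq[symmetric])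
  have q: "q < ?d" unfolding q_def by simp
  let ?G = "\<lambda>k. (case i of 0 \<Rightarrow> 0 | Suc i' \<Rightarrow> F ?m i' k)"
  have Fd: "\<And>r. F ?d i r = (\<Sum>k<?m. if k < r then ?G k else F ?m i k)" by (simp only: F.simps(3))
  show ?thesis
  proof (cases "Suc q = ?d")
    case True
    then have d1: "Suc t div ?d = Suc i" "Suc t mod ?d = 0"
      unfolding i_def q_def by (simp_all add: div_Suc mod_Suc)
    have "Sq ?d t = F ?d i 0" unfolding Sq_def i_def[symmetric] q_def[symmetric] using True by simp
    also have "\<dots> = (\<Sum>k<?m. F ?m i k)" unfolding Fd by simp
    also have "\<dots> = F ?d (Suc i) ?m" by (simp only: F.simps(3)) simp
    also have "\<dots> = Sq ?d (Suc t)" unfolding Sq_def d1 by simp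
    finally show ?thesis by simp
  next
    case False
    then have qn: "q \<le> n" using q by simp
    then have d1: "Suc t div ?d = i" "Suc t mod ?d = Suc q"
      unfolding i_def q_def using False by (simp_all add: div_Suc mod_Suc q_def)
    define r0 where "r0 = n - q"
    have s1: "Sq ?d t = F ?d i (Suc r0)" unfolding Sq_def i_def[symmetric] q_def[symmetric] r0_def
      using qn by (simp add: Suc_diff_le)
    have s2: "Sq ?d (Suc t) = F ?d i r0" unfolding Sq_def d1 r0_def by simp
    have key: "?G r0 \<le> F ?m i r0"
    proof (cases i)
      case 0 then show ?thesis by simp
    next
      case (Suc i')
      let ?u = "i' * ?m + q" and ?v = "Suc i' * ?m + q"
      have qm: "q < ?m" using qn by simp
      have du: "?u div ?m = i'" "?u mod ?m = q" using divmod_eq[OF qm, of i'] by auto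
      have dv: "?v div ?m = Suc i'" "?v mod ?m = q" using divmod_eq[OF qm, of "Suc i'"] by auto
      have "2 * (Suc i' * ?d + q) + 1 \<le> ?d * ?d - 1" using t tq Suc by simp
      then have "?u + ?v \<le> ?m * ?m - 1" using arith_nat[OF qn] by simp
      then have "Sq ?m ?u \<le> Sq ?m ?v" using Q by simp
      then show ?thesis unfolding Sq_def du dv Suc r0_def by simp
    qed
    have "F ?d i (Suc r0) \<le> F ?d i r0" unfolding Fd
    proof (rule sum_mono)
      fix k assume "k \<in> {..<?m}"
      show "(if k < Suc r0 then ?G k else F ?m i k) \<le> (if k < r0 then ?G k else F ?m i k)"
      proof (cases "k = r0")
        case True then show ?thesis unfolding True using key by simp
      next
        case False then show ?thesis by auto
      qed
    qed
    then show ?thesis using s1 s2 by simp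
  qed
qed

lemma Q_of:
  fixes s :: "nat \<Rightarrow> nat"
  assumes P: "\<forall>t. 2 * t + 1 \<le> N \<longrightarrow> s t \<le> s (Suc t)"
    and Sy: "\<forall>t\<le>N. s t = s (N - t)"
  shows "\<forall>u v. u \<le> v \<longrightarrow> u + v \<le> N \<longrightarrow> s u \<le> s v"
proof (intro allI impI)
  fix u v assume "u \<le> v" "u + v \<le> N"
  then show "s u \<le> s v"
  proof (induction v rule: less_induct)
    case (less v)
    show ?case
    proof (cases "v = u")
      case True then show ?thesis by simp
    next
      case False
      then have uv: "u < v" using less.prems by simp
      show ?thesis
      proof (cases "2 * (v - 1) + 1 \<le> N")
        case True
        have a: "s (v - 1) \<le> s (Suc (v - 1))" using P True by blast
        have b: "s u \<le> s (v - 1)" using less.IH[of "v - 1"] uv less.prems by simp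
        show ?thesis using a b uv by simp
      next
        case False
        then have lt: "N - v < v" using uv by arith
        have "s u \<le> s (N - v)" using less.IH[OF lt] less.prems by simp
        also have "\<dots> = s v" using Sy[rule_format, of v] less.prems by simp
        finally show ?thesis .
      qed
    qed
  qed
qed

lemma Sq_sym': "1 \<le> d \<Longrightarrow> \<forall>t\<le>d * d - 1. Sq d t = Sq d (d * d - 1 - t)"
proof -
  assume "1 \<le> d"
  then obtain m where m: "d = Suc m" by (cases d) auto
  show ?thesis unfolding m using Sq_sym[of _ m] by blast
qed

lemma P_all: "1 \<le> d \<Longrightarrow> \<forall>t. 2 * t + 1 \<le> d * d - 1 \<longrightarrow> Sq d t \<le> Sq d (Suc t)"
proof (induction d)
  case 0 then show ?case by simp
next
  case (Suc d)
  note IH = Suc.IH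
  show ?case
  proof (cases d)
    case 0 then show ?thesis by simp
  next
    case (Suc n)
    have "1 \<le> d" using Suc by simp
    then have P': "\<forall>t. 2 * t + 1 \<le> Suc n * Suc n - 1 \<longrightarrow> Sq (Suc n) t \<le> Sq (Suc n) (Suc t)"
      using IH unfolding Suc by blast
    have S': "\<forall>t \<le> Suc n * Suc n - 1. Sq (Suc n) t = Sq (Suc n) (Suc n * Suc n - 1 - t)"
      using Sq_sym by blast
    have Q: "\<forall>u v. u \<le> v \<longrightarrow> u + v \<le> Suc n * Suc n - 1 \<longrightarrow> Sq (Suc n) u \<le> Sq (Suc n) v"
      by (rule Q_of[OF P' S'])
    have "\<forall>t. 2 * t + 1 \<le> Suc (Suc n) * Suc (Suc n) - 1 \<longrightarrow> Sq (Suc (Suc n)) t \<le> Sq (Suc (Suc n)) (Suc t)"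
      using step[OF Q] by blast
    then show ?thesis unfolding Suc .
  qed
qed

lemma Aseq_Sq: "1 \<le> d \<Longrightarrow> Aseq d t = Sq d t"
proof -
  assume d: "1 \<le> d"
  have "t mod d < d" using d by simp
  then have "A d (t div d) (d - t mod d) = F d (t div d) (d - t mod d - 1)"
    by (intro A_F) auto
  then show ?thesis unfolding Aseq_def Sq_def by (simp add: diff_commute)
qed

theorem corollary4p10:
  fixes d :: nat
  assumes "d \<ge> 1"
  shows "symmetric_seq (Aseq d) (d^2 - 1) \<and> unimodal_seq (Aseq d) (d^2 - 1)
         \<and> unimodal_at (Aseq d) (d^2 - 1) ((d^2 - 1) div 2)"
proof -
  define N where "N = d * d - 1"
  have eqN: "d^2 - 1 = N" unfolding N_def by (simp add: power2_eq_square)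
  have As: "Aseq d = Sq d" using Aseq_Sq assms by auto
  have Sy: "\<forall>t\<le>N. Sq d t = Sq d (N - t)" unfolding N_def using Sq_sym' assms by blast
  have P: "\<forall>t. 2 * t + 1 \<le> N \<longrightarrow> Sq d t \<le> Sq d (Suc t)" unfolding N_def using P_all assms by blast
  have U: "unimodal_at (Sq d) N (N div 2)"
    unfolding unimodal_at_def
  proof (intro conjI allI impI)
    show "N div 2 \<le> N" by simp
  next
    fix t assume "t < N div 2"
    then have "2 * t + 1 \<le> N" by linarith
    then show "Sq d t \<le> Sq d (Suc t)" using P by blast
  next
    fix t assume a: "N div 2 \<le> t \<and> t < N"
    have "2 * (N - Suc t) + 1 \<le> N" using a by linarith
    then have "Sq d (N - Suc t) \<le> Sq d (Suc (N - Suc t))" using P by blast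
    moreover have "Suc t \<le> N" using a by simp
    then have "Sq d (Suc t) = Sq d (N - Suc t)" using Sy by blast
    moreover have "t \<le> N" using a by simp
    then have "Sq d t = Sq d (N - t)" using Sy by blast
    moreover have "N - t = Suc (N - Suc t)" using a by arith
    ultimately show "Sq d (Suc t) \<le> Sq d t" by simp
  qed
  show ?thesis unfolding eqN As symmetric_seq_def unimodal_seq_def using Sy U by blast
qed

end
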